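(* For all integers $k$ and $M$, the series below converges absolutely and $$\sum_{n=-\infty}^{M} q^{2n}\cos_q\!\big(q^{2(k+n)}\big)=q^{-2k}\sin_q\!\big(q^{2(k+M)}\big).$$ Equivalently, with $\Theta(q^{2n}-q^{2M})=1$ for $n\le M$ and $0$ for $n>M$, one has $N_q\sum_{n\in\mathbb{Z}}q^{2n}\cos_q(q^{2(k+n)})\Theta(q^{2n}-q^{2M})=N_q\,q^{-2k}\sin_q(q^{2(k+M)})$ for any constant $N_q$.
   Context: Fix a real number $q>1$ and let $(q^{-2};q^{-2})_n=\prod_{j=1}^n(1-q^{-2j})$. Define $\sin_q(z)=\sum_{n\ge0}(-1)^nq^{-2n(n+1)}\frac{z^{2n+1}}{(q^{-2};q^{-2})_{2n+1}}$ and $\cos_q(z)=\sum_{n\ge0}(-1)^nq^{-2n(n+1)}\frac{z^{2n}}{(q^{-2};q^{-2})_{2n}}$. *)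

theory Defs
  imports "HOL-Analysis.Analysis"
begin

definition qpoch :: "real \<Rightarrow> nat \<Rightarrow> real" where
  "qpoch q n = (\<Prod>j=1..n. 1 - q powi (-2 * int j))"

definition sin_q :: "real \<Rightarrow> real \<Rightarrow> real" where
  "sin_q q z = (\<Sum>n. (-1)^n * q powi (-2 * int n * (int n + 1)) * z ^ (2*n+1) / qpoch q (2*n+1))"

definition cos_q :: "real \<Rightarrow> real \<Rightarrow> real" where
  "cos_q q z = (\<Sum>n. (-1)^n * q powi (-2 * int n * (int n + 1)) * z ^ (2*n) / qpoch q (2*n))"

end

theory Submission
  imports Defs
begin

definition qp :: "real \<Rightarrow> nat \<Rightarrow> real" where
  "qp p n = (\<Prod>j=1..n. 1 - p ^ j)"

definition sq :: "real \<Rightarrow> real \<Rightarrow> real" where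
  "sq p w = (\<Sum>n. (-1)^n * p^(n*(n+1)) * w^(2*n+1) / qp p (2*n+1))"

definition cq :: "real \<Rightarrow> real \<Rightarrow> real" where
  "cq p w = (\<Sum>n. (-1)^n * p^(n*(n+1)) * w^(2*n) / qp p (2*n))"

definition bnd :: "real \<Rightarrow> real \<Rightarrow> nat \<Rightarrow> real" where
  "bnd p W n = p^(n*(n+1)) * W^(2*n) / (1-p)^(2*n+1)"

lemma qp_lb:
  assumes "0 < p" "p < 1"
  shows "(1-p)^n \<le> qp p n"
proof -
  have "(1-p)^n = (\<Prod>j=1..n. 1 - p)" by simp
  also have "\<dots> \<le> qp p n" unfolding qp_def
  proof (rule prod_mono)
    fix j assume "j \<in> {1..n}"
    then have "p ^ j \<le> p" using assms by (simp add: power_le_one_iff power_decreasing_iff) 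
       (metis One_nat_def assms(1) assms(2) less_eq_real_def power_decreasing power_one_right)
    then show "0 \<le> 1 - p \<and> 1 - p \<le> 1 - p ^ j" using assms by simp
  qed
  finally show ?thesis .
qed

lemma qp_pos:
  assumes "0 < p" "p < 1"
  shows "0 < qp p n"
  using qp_lb[OF assms, of n] assms
  by (smt (verit) zero_less_power)

lemma qp_Suc: "qp p (Suc n) = qp p n * (1 - p^(Suc n))"
  unfolding qp_def by (simp add: prod.nat_ivl_Suc')

lemma bnd_summable:
  assumes "0 < p" "p < 1"
  shows "summable (bnd p W)"
proof -
  define r where "r n = p^(n+1) * W^2 / (1-p)^2" for n
  have p1: "(\<lambda>n. p^(n+1)) \<longlonglongrightarrow> 0"
    using LIMSEQ_Suc[OF LIMSEQ_power_zero[of p]] assms by simp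
  have "r \<longlonglongrightarrow> 0 * (W^2 / (1-p)^2)"
    unfolding r_def times_divide_eq_right[symmetric] mult.assoc
    by (intro tendsto_mult p1 tendsto_const)
  then have "r \<longlonglongrightarrow> 0" by simp
  then have ev: "eventually (\<lambda>n. r n < 1/2) sequentially"
    by (rule order_tendstoD) simp
  have "summable (\<lambda>n. (1/(1-p)) * (1/2)^n)"
    by (intro summable_mult summable_geometric) simp
  moreover have "eventually (\<lambda>n. norm (bnd p W n) \<le> (1/(1-p)) * (1/2)^n) sequentially"
    using ev
  proof eventually_elim
    case (elim n)
    have r0: "0 \<le> r n" unfolding r_def using assms by simp
    have eq: "bnd p W n = (1/(1-p)) * (r n)^n"
      unfolding bnd_def r_def using assms
      by (simp add: power_mult_distrib power_divide field_simps flip: power_mult power_add)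
    have "(r n)^n \<le> (1/2)^n" using r0 elim by (intro power_mono) auto
    then show ?case unfolding eq using assms r0 by (simp add: abs_mult divide_le_cancel)
  qed
  ultimately show ?thesis by (rule summable_comparison_test_ev[rotated])
qed

lemma bnd_nonneg: "0 < p \<Longrightarrow> p < 1 \<Longrightarrow> 0 \<le> bnd p W n"
  unfolding bnd_def by simp

lemma sterm_bound:
  assumes "0 < p" "p < 1" "\<bar>w\<bar> \<le> W"
  shows "\<bar>(-1)^n * p^(n*(n+1)) * w^(2*n+1) / qp p (2*n+1)\<bar> \<le> \<bar>w\<bar> * bnd p W n"
proof -
  have q0: "0 < qp p (2*n+1)" by (rule qp_pos[OF assms(1,2)])
  have l: "(1-p)^(2*n+1) \<le> qp p (2*n+1)" by (rule qp_lb[OF assms(1,2)])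
  have wp: "\<bar>w\<bar>^(2*n) \<le> W^(2*n)" using assms(3) by (intro power_mono) auto
  have "\<bar>(-1)^n * p^(n*(n+1)) * w^(2*n+1) / qp p (2*n+1)\<bar>
        = \<bar>w\<bar> * (p^(n*(n+1)) * \<bar>w\<bar>^(2*n)) / qp p (2*n+1)"
    using q0 assms by (simp add: abs_mult power_abs)
  also have "\<dots> \<le> \<bar>w\<bar> * (p^(n*(n+1)) * W^(2*n)) / qp p (2*n+1)"
    using q0 wp assms by (intro divide_right_mono mult_left_mono) auto
  also have "\<dots> \<le> \<bar>w\<bar> * (p^(n*(n+1)) * W^(2*n)) / (1-p)^(2*n+1)"
    using q0 l assms(1,2,3) by (intro divide_left_mono) auto
  finally show ?thesis unfolding bnd_def by simp
qed

lemma cterm_bound: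
  assumes "0 < p" "p < 1" "\<bar>w\<bar> \<le> W"
  shows "\<bar>(-1)^n * p^(n*(n+1)) * w^(2*n) / qp p (2*n)\<bar> \<le> bnd p W n"
proof -
  have q0: "0 < qp p (2*n)" by (rule qp_pos[OF assms(1,2)])
  have l: "(1-p)^(2*n) \<le> qp p (2*n)" by (rule qp_lb[OF assms(1,2)])
  have l2: "(1-p)^(2*n+1) \<le> (1-p)^(2*n)"
    by (rule power_decreasing) (use assms in auto)
  have wp: "\<bar>w\<bar>^(2*n) \<le> W^(2*n)" using assms(3) by (intro power_mono) auto
  have "\<bar>(-1)^n * p^(n*(n+1)) * w^(2*n) / qp p (2*n)\<bar>
        = (p^(n*(n+1)) * \<bar>w\<bar>^(2*n)) / qp p (2*n)"
    using q0 assms by (simp add: abs_mult power_abs)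
  also have "\<dots> \<le> (p^(n*(n+1)) * W^(2*n)) / qp p (2*n)"
    using q0 wp assms by (intro divide_right_mono mult_left_mono) auto
  also have "\<dots> \<le> (p^(n*(n+1)) * W^(2*n)) / (1-p)^(2*n+1)"
  proof (rule divide_left_mono)
    show "(1-p)^(2*n+1) \<le> qp p (2*n)" using l l2 by linarith
    show "0 \<le> p^(n*(n+1)) * W^(2*n)" using assms by (simp add: zero_le_mult_iff)
    show "0 < qp p (2*n) * (1-p)^(2*n+1)" using q0 assms by simp
  qed
  finally show ?thesis unfolding bnd_def by simp
qed

lemma sterm_summable:
  assumes "0 < p" "p < 1"
  shows "summable (\<lambda>n. (-1)^n * p^(n*(n+1)) * w^(2*n+1) / qp p (2*n+1))"
  by (rule summable_comparison_test'[where g="\<lambda>n. \<bar>w\<bar> * bnd p \<bar>w\<bar> n"])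
     (use sterm_bound[OF assms] summable_mult[OF bnd_summable[OF assms]] in auto)

lemma cterm_summable:
  assumes "0 < p" "p < 1"
  shows "summable (\<lambda>n. (-1)^n * p^(n*(n+1)) * w^(2*n) / qp p (2*n))"
  by (rule summable_comparison_test'[where g="bnd p \<bar>w\<bar>"])
     (use cterm_bound[OF assms] bnd_summable[OF assms] in auto)

lemma abs_suminf_le:
  fixes f g :: "nat \<Rightarrow> real"
  assumes "\<And>n. \<bar>f n\<bar> \<le> g n" "summable g"
  shows "\<bar>suminf f\<bar> \<le> suminf g"
proof -
  have s: "summable (\<lambda>n. \<bar>f n\<bar>)"
    by (rule summable_comparison_test'[OF assms(2)]) (use assms(1) in auto)
  have "\<bar>suminf f\<bar> \<le> (\<Sum>n. \<bar>f n\<bar>)" by (rule summable_rabs[OF s])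
  also have "\<dots> \<le> suminf g" by (rule suminf_le[OF assms(1) s assms(2)])
  finally show ?thesis .
qed

lemma sq_bound:
  assumes "0 < p" "p < 1" "\<bar>w\<bar> \<le> W"
  shows "\<bar>sq p w\<bar> \<le> \<bar>w\<bar> * suminf (bnd p W)"
proof -
  have "\<bar>sq p w\<bar> \<le> (\<Sum>n. \<bar>w\<bar> * bnd p W n)"
    unfolding sq_def
    by (rule abs_suminf_le[OF _ summable_mult[OF bnd_summable[OF assms(1,2)]]])
       (use sterm_bound[OF assms] in auto) 
  also have "\<dots> = \<bar>w\<bar> * suminf (bnd p W)"
    by (rule suminf_mult[OF bnd_summable[OF assms(1,2)]])
  finally show ?thesis .
qed

lemma cq_bound:
  assumes "0 < p" "p < 1" "\<bar>w\<bar> \<le> W"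
  shows "\<bar>cq p w\<bar> \<le> suminf (bnd p W)"
  unfolding cq_def
  by (rule abs_suminf_le[OF _ bnd_summable[OF assms(1,2)]])
     (use cterm_bound[OF assms] in auto) 

lemma sq_diff:
  assumes "0 < p" "p < 1"
  shows "sq p w - sq p (p*w) = w * cq p w"
proof -
  have "sq p w - sq p (p*w) = (\<Sum>n. (-1)^n * p^(n*(n+1)) * w^(2*n+1) / qp p (2*n+1)
      - (-1)^n * p^(n*(n+1)) * (p*w)^(2*n+1) / qp p (2*n+1))"
    unfolding sq_def using suminf_diff[OF sterm_summable[OF assms, of w] sterm_summable[OF assms, of "p*w"]]
    by simp
  also have "\<dots> = (\<Sum>n. w * ((-1)^n * p^(n*(n+1)) * w^(2*n) / qp p (2*n)))"
  proof (rule suminf_cong)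
    fix n
    have q0: "qp p (2*n) \<noteq> 0" using qp_pos[OF assms] by (metis less_irrefl)
    have q1: "1 - p^(Suc (2*n)) \<noteq> 0" using assms
      by (metis diff_gt_0_iff_gt less_irrefl power_less_one_iff zero_less_Suc less_eq_real_def)
    show "(-1)^n * p^(n*(n+1)) * w^(2*n+1) / qp p (2*n+1)
      - (-1)^n * p^(n*(n+1)) * (p*w)^(2*n+1) / qp p (2*n+1)
      = w * ((-1)^n * p^(n*(n+1)) * w^(2*n) / qp p (2*n))"
    proof -
      have gen: "c*x/(Q*D) - c*(t*x)/(Q*D) = c*x/Q" if "Q \<noteq> 0" "D \<noteq> 0" "D = 1 - t"
        for c x Q D t :: real
      proof -
        have "c*x/(Q*D) - c*(t*x)/(Q*D) = (c*x*D)/(Q*D)" unfolding that(3)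
          by (simp add: diff_divide_distrib[symmetric] algebra_simps)
        then show ?thesis using that by simp
      qed
      have e1: "qp p (2*n+1) = qp p (2*n) * (1 - p^(Suc (2*n)))" using qp_Suc by simp
      have e2: "(p*w)^(2*n+1) = p^(Suc (2*n)) * w^(2*n+1)" by (simp add: power_mult_distrib)
      show ?thesis unfolding e1 e2
        by (subst gen[OF q0 q1 refl]) simp
    qed
  qed
  also have "\<dots> = w * cq p w"
    unfolding cq_def by (rule suminf_mult[OF cterm_summable[OF assms]])
  finally show ?thesis .
qed

lemma powi_neg2:
  fixes q :: real
  assumes "q \<noteq> 0"
  shows "q powi (-2 * int j) = (inverse (q^2))^j"
proof -
  have "q powi (-2 * int j) = inverse (q powi (int (2*j)))"
    by (simp add: power_int_minus[symmetric])
  also have "\<dots> = inverse (q ^ (2*j))" by (simp only: power_int_of_nat)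
  also have "\<dots> = (inverse (q^2))^j" by (simp add: power_inverse power_mult)
  finally show ?thesis .
qed

lemma powi_neg2b:
  fixes q :: real
  assumes "q \<noteq> 0"
  shows "q powi (-2 * int n * (int n + 1)) = (inverse (q^2))^(n*(n+1))"
proof -
  have "-2 * int n * (int n + 1) = -2 * int (n*(n+1))" by (simp add: algebra_simps)
  then show ?thesis by (simp only: powi_neg2[OF assms])
qed

lemma qpoch_eq: assumes q0: "q \<noteq> 0" shows "qpoch q m = qp (inverse (q^2)) m"
  unfolding qpoch_def qp_def by (intro prod.cong refl) (simp only: powi_neg2[OF q0])

lemma sin_q_eq: assumes q0: "q \<noteq> 0" shows "sin_q q w = sq (inverse (q^2)) w"
  unfolding sin_q_def sq_def by (intro suminf_cong) (simp only: powi_neg2b[OF q0] qpoch_eq[OF q0])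

lemma cos_q_eq: assumes q0: "q \<noteq> 0" shows "cos_q q w = cq (inverse (q^2)) w"
  unfolding cos_q_def cq_def by (intro suminf_cong) (simp only: powi_neg2b[OF q0] qpoch_eq[OF q0])

theorem mainTheorem8:
  fixes q :: real and k M :: int
  assumes "q > 1"
  shows "(\<lambda>n. \<bar>q powi (2*n) * cos_q q (q powi (2*(k+n)))\<bar>) summable_on {..M}
       \<and> ((\<lambda>n. q powi (2*n) * cos_q q (q powi (2*(k+n))))
            has_sum (q powi (-2*k) * sin_q q (q powi (2*(k+M))))) {..M}"
proof -
  define p where "p = inverse (q^2)"
  have q0: "q \<noteq> 0" using assms by simp
  have p0: "0 < p" unfolding p_def using assms by simp
  have p1: "p < 1" unfolding p_def using assms
    by (simp add: inverse_less_1_iff)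
  define Z where "Z = q powi (2*(k+M))"
  define A where "A = q powi (-2*k)"
  have Z0: "0 < Z" unfolding Z_def using assms by simp
  define K where "K = suminf (bnd p Z)"
  define f where "f n = q powi (2*n) * cos_q q (q powi (2*(k+n)))" for n
  define h where "h m = M - int m" for m :: nat
  have bij: "bij_betw h UNIV {..M}"
    by (rule bij_betw_byWitness[where f'="\<lambda>n. nat (M - n)"]) (auto simp: h_def)
  have pm: "q powi (-2 * int m) = p^m" for m unfolding p_def by (rule powi_neg2[OF q0])
  have e1: "q powi (2*(k + h m)) = Z * p^m" for m
  proof -
    have "2*(k + h m) = 2*(k+M) + (-2 * int m)" unfolding h_def by simp
    then show ?thesis unfolding Z_def pm[symmetric] by (simp only: power_int_add q0 simp_thms)
  qed
  have e2: "q powi (2 * h m) = A * (Z * p^m)" for m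
  proof -
    have "2 * h m = -2*k + 2*(k+M) + (-2 * int m)" unfolding h_def by simp
    then show ?thesis unfolding Z_def A_def pm[symmetric] by (simp only: power_int_add q0 simp_thms)
  qed
  define F where "F m = A * sq p (Z * p^m)" for m
  have fh: "f (h m) = F m - F (Suc m)" for m
  proof -
    have "f (h m) = A * ((Z * p^m) * cq p (Z * p^m))"
      unfolding f_def e1 e2 cos_q_eq[OF q0] p_def[symmetric] by simp
    also have "\<dots> = A * (sq p (Z * p^m) - sq p (p * (Z * p^m)))"
      using sq_diff[OF p0 p1] by simp
    also have "\<dots> = F m - F (Suc m)" unfolding F_def by (simp add: algebra_simps)
    finally show ?thesis .
  qed
  have Zp: "\<bar>Z * p^m\<bar> \<le> Z" for m
    using Z0 p0 p1 by (simp add: abs_mult mult_left_le_one_le power_le_one)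
  have fb: "\<bar>f (h m)\<bar> \<le> (\<bar>A\<bar> * Z * K) * p^m" for m
  proof -
    have "\<bar>f (h m)\<bar> = \<bar>A\<bar> * (Z * p^m) * \<bar>cq p (Z * p^m)\<bar>"
      unfolding f_def e1 e2 cos_q_eq[OF q0] p_def[symmetric] using Z0 p0 by (simp add: abs_mult)
    also have "\<dots> \<le> \<bar>A\<bar> * (Z * p^m) * K"
      unfolding K_def using cq_bound[OF p0 p1 Zp] Z0 p0 by (intro mult_left_mono) auto
    finally show ?thesis by (simp add: algebra_simps)
  qed
  have sumabs: "summable (\<lambda>m. \<bar>f (h m)\<bar>)"
    by (rule summable_comparison_test'[where g="\<lambda>m. (\<bar>A\<bar> * Z * K) * p^m"])
       (use fb p0 p1 in \<open>auto intro!: summable_mult summable_geometric\<close>)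
  have Flim: "F \<longlonglongrightarrow> 0"
  proof (rule Lim_null_comparison)
    show "\<forall>\<^sub>F m in sequentially. norm (F m) \<le> (\<bar>A\<bar> * Z * K) * p^m"
    proof (intro always_eventually allI)
      fix m
      have "norm (F m) = \<bar>A\<bar> * \<bar>sq p (Z * p^m)\<bar>" unfolding F_def by (simp add: abs_mult)
      also have "\<dots> \<le> \<bar>A\<bar> * (\<bar>Z * p^m\<bar> * K)"
        unfolding K_def by (intro mult_left_mono sq_bound[OF p0 p1 Zp]) auto
      finally show "norm (F m) \<le> (\<bar>A\<bar> * Z * K) * p^m" using Z0 p0 by (simp add: abs_mult algebra_simps)
    qed
    show "(\<lambda>m. (\<bar>A\<bar> * Z * K) * p^m) \<longlonglongrightarrow> 0"
      by (rule tendsto_mult_right_zero) (rule LIMSEQ_power_zero, use p0 p1 in auto)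
  qed
  have sums: "(\<lambda>m. f (h m)) sums (A * sin_q q Z)"
  proof -
    have "(\<lambda>m. F m - F (Suc m)) sums (F 0 - 0)" by (rule telescope_sums'[OF Flim])
    moreover have "F 0 = A * sin_q q Z" unfolding F_def sin_q_eq[OF q0] p_def by simp
    ultimately show ?thesis unfolding fh by simp
  qed
  have hs: "((\<lambda>m. f (h m)) has_sum (A * sin_q q Z)) UNIV"
    by (rule norm_summable_imp_has_sum) (use sumabs sums in auto)
  have "(f has_sum (A * sin_q q Z)) {..M}"
    using hs has_sum_reindex_bij_betw[OF bij, of f] by simp
  moreover have "(\<lambda>n. \<bar>f n\<bar>) summable_on {..M}"
  proof -
    have "(\<lambda>m. \<bar>f (h m)\<bar>) summable_on UNIV"
      by (rule summable_nonneg_imp_summable_on[OF sumabs]) simp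
    then show ?thesis using summable_on_reindex_bij_betw[OF bij, of "\<lambda>n. \<bar>f n\<bar>"] by simp
  qed
  ultimately show ?thesis unfolding f_def A_def Z_def by simp
qed

end
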